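(* Let $G$ be a digraph that is not strongly connected, and suppose $G$ has a strongly connected subdigraph $G'$ with at least one arc such that $G'$ is not a directed cycle. Then $d(L^kG)\to\infty$ as $k\to\infty$.
   Context: Digraphs are finite and may have loops and multiple arcs. The line digraph $LG$ has as vertex set the set of arcs of $G$, with an arc from $e$ to $f$ whenever the head of $e$ equals the tail of $f$; $L^0G=G$, $L^kG=L(L^{k-1}G)$. The inner diameter is $d(G)=\max\{\mathrm{dist}_G(u,v): \mathrm{dist}_G(u,v)<\infty\}$, where $\mathrm{dist}_G(u,v)$ is the length of a shortest directed walk from $u$ to $v$. A directed cycle is a digraph with vertices $v_0,\dots,v_{n-1}$ ($n\ge1$) and exactly the arcs $(v_i,v_{i+1\bmod n})$. *)

theory Defs
  imports Main "HOL-Library.Nat_Bijection"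
begin

text \<open>Vertices and arcs are
  (codes in) natural numbers; every finite digraph is isomorphic to one of
  this form, and all notions below are isomorphism invariant.\<close>

record dg =
  dverts :: "nat set"
  darcs :: "nat set"
  dtail :: "nat \<Rightarrow> nat"
  dhead :: "nat \<Rightarrow> nat"

definition wf_dg :: "dg \<Rightarrow> bool" where
  "wf_dg G \<longleftrightarrow> finite (dverts G) \<and> finite (darcs G) \<and>
     (\<forall>e\<in>darcs G. dtail G e \<in> dverts G \<and> dhead G e \<in> dverts G)"

text \<open>Line digraph: vertices are the arcs of G; there is one arc (coded as
  the pair (e,f)) from e to f whenever head e = tail f.\<close>
definition line_dg :: "dg \<Rightarrow> dg" where
  "line_dg G = \<lparr> dverts = darcs G,
     darcs = {prod_encode (e, f) | e f. e \<in> darcs G \<and> f \<in> darcs G \<and> dhead G e = dtail G f},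
     dtail = (\<lambda>a. fst (prod_decode a)),
     dhead = (\<lambda>a. snd (prod_decode a)) \<rparr>"

definition iter_line_dg :: "nat \<Rightarrow> dg \<Rightarrow> dg" where
  "iter_line_dg k G = (line_dg ^^ k) G"

fun is_walk :: "dg \<Rightarrow> nat \<Rightarrow> nat list \<Rightarrow> nat \<Rightarrow> bool" where
  "is_walk G u [] v \<longleftrightarrow> u = v \<and> u \<in> dverts G"
| "is_walk G u (e # es) v \<longleftrightarrow> e \<in> darcs G \<and> dtail G e = u \<and> u \<in> dverts G \<and>
     is_walk G (dhead G e) es v"

definition reachable :: "dg \<Rightarrow> nat \<Rightarrow> nat \<Rightarrow> bool" where
  "reachable G u v \<longleftrightarrow> (\<exists>es. is_walk G u es v)"

text \<open>dist_G(u,v): length of a shortest directed walk (meaningful when finite).\<close>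
definition dist :: "dg \<Rightarrow> nat \<Rightarrow> nat \<Rightarrow> nat" where
  "dist G u v = (LEAST n. \<exists>es. is_walk G u es v \<and> length es = n)"

definition inner_diam :: "dg \<Rightarrow> nat" where
  "inner_diam G = Max {dist G u v | u v. u \<in> dverts G \<and> v \<in> dverts G \<and> reachable G u v}"

definition strongly_connected :: "dg \<Rightarrow> bool" where
  "strongly_connected G \<longleftrightarrow> (\<forall>u\<in>dverts G. \<forall>v\<in>dverts G. reachable G u v)"

definition subdigraph :: "dg \<Rightarrow> dg \<Rightarrow> bool" where
  "subdigraph H G \<longleftrightarrow> wf_dg H \<and> dverts H \<subseteq> dverts G \<and> darcs H \<subseteq> darcs G \<and>
     (\<forall>e\<in>darcs H. dtail H e = dtail G e \<and> dhead H e = dhead G e)"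

definition is_directed_cycle :: "dg \<Rightarrow> bool" where
  "is_directed_cycle G \<longleftrightarrow> (\<exists>(n::nat) vs ars. n \<ge> 1 \<and>
     bij_betw vs {0..<n} (dverts G) \<and> bij_betw ars {0..<n} (darcs G) \<and>
     (\<forall>i<n. dtail G (ars i) = vs i \<and> dhead G (ars i) = vs ((i + 1) mod n)))"

end

theory Submission
  imports Defs
begin

lemma walk_end: "is_walk G u es v \<Longrightarrow> u \<in> dverts G \<and> v \<in> dverts G"
  by (induction es arbitrary: u) auto

lemma line_simps[simp]:
  "dverts (line_dg G) = darcs G"
  "dtail (line_dg G) = (\<lambda>a. fst (prod_decode a))"
  "dhead (line_dg G) = (\<lambda>a. snd (prod_decode a))"
  by (simp_all add: line_dg_def)

lemma line_arcs:
  "p \<in> darcs (line_dg G) \<longleftrightarrow> (\<exists>e f. p = prod_encode (e, f) \<and> e \<in> darcs G \<and> f \<in> darcs G \<and> dhead G e = dtail G f)"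
  by (simp add: line_dg_def)

lemma enc_in_line[simp]:
  "prod_encode (e, f) \<in> darcs (line_dg G) \<longleftrightarrow> e \<in> darcs G \<and> f \<in> darcs G \<and> dhead G e = dtail G f"
  by (auto simp: line_arcs)

lemma wf_line: "wf_dg G \<Longrightarrow> wf_dg (line_dg G)"
proof -
  assume w: "wf_dg G"
  have "darcs (line_dg G) \<subseteq> prod_encode ` (darcs G \<times> darcs G)"
    by (auto simp: line_arcs)
  moreover have "finite (prod_encode ` (darcs G \<times> darcs G))" using w by (simp add: wf_dg_def)
  ultimately have "finite (darcs (line_dg G))" by (rule finite_subset)
  then show ?thesis using w by (auto simp: wf_dg_def line_arcs)
qed

lemma sub_line: "subdigraph K G \<Longrightarrow> subdigraph (line_dg K) (line_dg G)"
  unfolding subdigraph_def by (auto simp: wf_line line_arcs; blast)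

lemma sub_walk: "subdigraph K G \<Longrightarrow> is_walk K u es v \<Longrightarrow> is_walk G u es v"
  by (induction es arbitrary: u) (auto simp: subdigraph_def)

lemma lift_walk: "is_walk K (dhead K e) es (dtail K f) \<Longrightarrow> e \<in> darcs K \<Longrightarrow> f \<in> darcs K \<Longrightarrow>
   \<exists>ps. is_walk (line_dg K) e ps f"
proof (induction es arbitrary: e)
  case Nil
  then show ?case by (intro exI[of _ "[prod_encode (e, f)]"]) auto
next
  case (Cons g gs)
  then obtain ps where "is_walk (line_dg K) g ps f" by auto
  then show ?case using Cons.prems by (intro exI[of _ "prod_encode (e, g) # ps"]) auto
qed

lemma sc_line: "wf_dg K \<Longrightarrow> strongly_connected K \<Longrightarrow> strongly_connected (line_dg K)"
  unfolding strongly_connected_def reachable_def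
proof (intro ballI)
  fix e f assume w: "wf_dg K" and sc: "\<forall>u\<in>dverts K. \<forall>v\<in>dverts K. \<exists>es. is_walk K u es v"
    and e: "e \<in> dverts (line_dg K)" and f: "f \<in> dverts (line_dg K)"
  then have "dhead K e \<in> dverts K" "dtail K f \<in> dverts K" by (auto simp: wf_dg_def)
  with sc obtain es where "is_walk K (dhead K e) es (dtail K f)" by blast
  then show "\<exists>ps. is_walk (line_dg K) e ps f" using e f lift_walk by auto
qed

definition branching :: "dg \<Rightarrow> bool" where
  "branching K \<longleftrightarrow> (\<exists>a1 a2. a1 \<in> darcs K \<and> a2 \<in> darcs K \<and> a1 \<noteq> a2 \<and> dtail K a1 = dtail K a2)"

lemma in_arc: "is_walk K u es v \<Longrightarrow> a \<in> darcs K \<Longrightarrow> dhead K a = u \<Longrightarrow> \<exists>b\<in>darcs K. dhead K b = v"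
  by (induction es arbitrary: u a) auto

lemma branch_line: "wf_dg K \<Longrightarrow> strongly_connected K \<Longrightarrow> branching K \<Longrightarrow> branching (line_dg K)"
proof -
  assume w: "wf_dg K" and sc: "strongly_connected K" and "branching K"
  then obtain a1 a2 where a: "a1 \<in> darcs K" "a2 \<in> darcs K" "a1 \<noteq> a2" "dtail K a1 = dtail K a2"
    unfolding branching_def by blast
  then have "dhead K a1 \<in> dverts K" "dtail K a1 \<in> dverts K" using w by (auto simp: wf_dg_def)
  then obtain es where "is_walk K (dhead K a1) es (dtail K a1)"
    using sc unfolding strongly_connected_def reachable_def by blast
  then obtain b where b: "b \<in> darcs K" "dhead K b = dtail K a1" using in_arc a by blast
  have 1: "prod_encode (b, a1) \<in> darcs (line_dg K)" using a b by simp
  have 2: "prod_encode (b, a2) \<in> darcs (line_dg K)" using a b by simp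
  have 3: "prod_encode (b, a1) \<noteq> prod_encode (b, a2)" using a by simp
  have 4: "dtail (line_dg K) (prod_encode (b, a1)) = dtail (line_dg K) (prod_encode (b, a2))" by simp
  show ?thesis unfolding branching_def using 1 2 3 4 by blast
qed

lemma out_arc: "strongly_connected K \<Longrightarrow> x \<in> dverts K \<Longrightarrow> a \<in> darcs K \<Longrightarrow> dtail K a = x \<Longrightarrow> y \<in> dverts K
   \<Longrightarrow> \<exists>e\<in>darcs K. dtail K e = y"
proof -
  assume sc: "strongly_connected K" and x: "x \<in> dverts K" and a: "a \<in> darcs K" "dtail K a = x"
    and y: "y \<in> dverts K"
  then obtain es where es: "is_walk K y es x" unfolding strongly_connected_def reachable_def by blast
  show ?thesis
  proof (cases es)
    case Nil then show ?thesis using es a by auto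
  next
    case (Cons e es') then show ?thesis using es by auto
  qed
qed

lemma card_arcs: "wf_dg K \<Longrightarrow> strongly_connected K \<Longrightarrow> branching K \<Longrightarrow> card (dverts K) < card (darcs K)"
proof -
  assume w: "wf_dg K" and sc: "strongly_connected K" and "branching K"
  then obtain a1 a2 where a: "a1 \<in> darcs K" "a2 \<in> darcs K" "a1 \<noteq> a2" "dtail K a1 = dtail K a2"
    unfolding branching_def by blast
  define x where "x = dtail K a1"
  have x: "x \<in> dverts K" using w a by (auto simp: wf_dg_def x_def)
  define out where "out y = (if y = x then a1 else SOME e. e \<in> darcs K \<and> dtail K e = y)" for y
  have out: "out y \<in> darcs K \<and> dtail K (out y) = y" if "y \<in> dverts K" for y
  proof (cases "y = x")
    case True
    then have "out y = a1" by (simp add: out_def)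
    then show ?thesis using a True x_def by simp
  next
    case False
    from out_arc[OF sc x a(1) _ that] have "\<exists>e. e \<in> darcs K \<and> dtail K e = y" by (auto simp: x_def)
    from someI_ex[OF this] show ?thesis using False unfolding out_def by simp
  qed
  have inj: "inj_on out (dverts K)"
  proof (rule inj_onI)
    fix a b assume ab: "a \<in> dverts K" "b \<in> dverts K" "out a = out b"
    have "dtail K (out a) = a" using out[OF ab(1)] by blast
    moreover have "dtail K (out b) = b" using out[OF ab(2)] by blast
    ultimately show "a = b" using ab(3) by metis
  qed
  have sub: "out ` dverts K \<subseteq> darcs K - {a2}"
  proof
    fix e assume "e \<in> out ` dverts K"
    then obtain y where y: "y \<in> dverts K" "e = out y" by blast
    have "e \<noteq> a2"
    proof
      assume e2: "e = a2"
      have "dtail K (out y) = y" using out[OF y(1)] by simp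
      then have "dtail K a2 = y" using e2 y(2) by simp
      then have yx: "y = x" using a(4) x_def by simp
      then have "out y = a1" by (simp add: out_def)
      then show False using e2 y(2) a(3) by simp
    qed
    then show "e \<in> darcs K - {a2}" using out y by auto
  qed
  have fin: "finite (darcs K)" using w by (simp add: wf_dg_def)
  have "card (dverts K) = card (out ` dverts K)" using inj by (simp add: card_image)
  also have "\<dots> \<le> card (darcs K - {a2})" using sub fin by (intro card_mono) auto
  also have "\<dots> < card (darcs K)" by (rule card_Diff1_less[OF fin a(2)])
  finally show ?thesis .
qed

definition outdeg :: "dg \<Rightarrow> nat \<Rightarrow> nat" where
  "outdeg G y = card {e \<in> darcs G. dtail G e = y}"

lemma outdeg_line: "finite (darcs G) \<Longrightarrow> (\<forall>y. outdeg G y \<le> D) \<Longrightarrow> outdeg (line_dg G) y \<le> D"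
proof -
  assume fin: "finite (darcs G)" and D: "\<forall>y. outdeg G y \<le> D"
  have "{p \<in> darcs (line_dg G). dtail (line_dg G) p = y} \<subseteq> (\<lambda>f. prod_encode (y, f)) ` {f \<in> darcs G. dtail G f = dhead G y}"
    by (auto simp: line_arcs)
  moreover have "finite {f \<in> darcs G. dtail G f = dhead G y}" using fin by simp
  ultimately have "outdeg (line_dg G) y \<le> card ((\<lambda>f. prod_encode (y, f)) ` {f \<in> darcs G. dtail G f = dhead G y})"
    unfolding outdeg_def by (intro card_mono) auto
  also have "\<dots> \<le> card {f \<in> darcs G. dtail G f = dhead G y}" by (rule card_image_le) (use fin in simp)
  also have "\<dots> \<le> D" using D by (simp add: outdeg_def)
  finally show ?thesis .
qed

definition S :: "dg \<Rightarrow> nat \<Rightarrow> nat \<Rightarrow> nat set" where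
  "S G i w = {v. \<exists>es. is_walk G w es v \<and> length es = i}"

lemma S_fin: "wf_dg G \<Longrightarrow> finite (S G i w)"
  by (rule finite_subset[of _ "dverts G"]) (auto simp: S_def wf_dg_def dest: walk_end)

lemma S_card: "wf_dg G \<Longrightarrow> (\<forall>y. outdeg G y \<le> D) \<Longrightarrow> card (S G i w) \<le> D ^ i"
proof (induction i arbitrary: w)
  case 0
  have "S G 0 w \<subseteq> {w}" by (auto simp: S_def)
  then have "card (S G 0 w) \<le> card {w}" by (intro card_mono) auto
  then show ?case by simp
next
  case (Suc i)
  let ?A = "{e \<in> darcs G. dtail G e = w}"
  have finA: "finite ?A" using Suc.prems by (simp add: wf_dg_def)
  have "S G (Suc i) w \<subseteq> (\<Union>e\<in>?A. S G i (dhead G e))"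
  proof
    fix v assume "v \<in> S G (Suc i) w"
    then obtain es where "is_walk G w es v" "length es = Suc i" by (auto simp: S_def)
    then obtain e es' where "es = e # es'" by (cases es) auto
    then show "v \<in> (\<Union>e\<in>?A. S G i (dhead G e))"
      using `is_walk G w es v` `length es = Suc i` by (auto simp: S_def)
  qed
  then have "card (S G (Suc i) w) \<le> card (\<Union>e\<in>?A. S G i (dhead G e))"
    using finA S_fin[OF Suc.prems(1)] by (intro card_mono) auto
  also have "\<dots> \<le> (\<Sum>e\<in>?A. card (S G i (dhead G e)))" by (rule card_UN_le[OF finA])
  also have "\<dots> \<le> (\<Sum>e\<in>?A. D ^ i)" using Suc by (intro sum_mono) auto
  also have "\<dots> = card ?A * D ^ i" by simp
  also have "\<dots> \<le> D * D ^ i" using Suc.prems(2) by (intro mult_right_mono) (auto simp: outdeg_def)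
  finally show ?case by simp
qed


lemma cycle_lemma:
  assumes w: "wf_dg H" and sc: "strongly_connected H" and ne: "darcs H \<noteq> {}"
    and nb: "\<not> branching H"
  shows "is_directed_cycle H"
proof -
  obtain a0 where a0: "a0 \<in> darcs H" using ne by blast
  define v0 where "v0 = dtail H a0"
  have v0: "v0 \<in> dverts H" using w a0 by (auto simp: wf_dg_def v0_def)
  have uniq: "e1 = e2" if "e1 \<in> darcs H" "e2 \<in> darcs H" "dtail H e1 = dtail H e2" for e1 e2
    using nb that unfolding branching_def by blast
  define out where "out y = (SOME e. e \<in> darcs H \<and> dtail H e = y)" for y
  have out: "out y \<in> darcs H \<and> dtail H (out y) = y" if "y \<in> dverts H" for y
  proof -
    from out_arc[OF sc v0 a0 _ that] have "\<exists>e. e \<in> darcs H \<and> dtail H e = y" by (auto simp: v0_def)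
    from someI_ex[OF this] show ?thesis unfolding out_def by simp
  qed
  have out_eq: "e = out (dtail H e)" if "e \<in> darcs H" for e
    using uniq[OF that] out that w by (auto simp: wf_dg_def)
  define s where "s y = dhead H (out y)" for y
  have sV: "s y \<in> dverts H" if "y \<in> dverts H" for y
    using out[OF that] w by (auto simp: wf_dg_def s_def)
  have sVn: "(s ^^ n) y \<in> dverts H" if "y \<in> dverts H" for y n
    by (induction n) (use that sV in auto)
  have walk_s: "v = (s ^^ length es) u" if "is_walk H u es v" for u es v
    using that
  proof (induction es arbitrary: u)
    case Nil then show ?case by simp
  next
    case (Cons e es)
    then have "e = out u" using out_eq by auto
    then have "dhead H e = s u" by (simp add: s_def)
    then show ?case using Cons by (simp add: funpow_swap1)
  qed
  have reach: "\<exists>m. v = (s ^^ m) u" if "u \<in> dverts H" "v \<in> dverts H" for u v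
    using sc that walk_s unfolding strongly_connected_def reachable_def by blast
  obtain m where m: "v0 = (s ^^ m) (s v0)" using reach[OF sV[OF v0] v0] by blast
  define P where "P n = (n \<ge> 1 \<and> (s ^^ n) v0 = v0)" for n
  have P1: "P (Suc m)" using m by (simp add: P_def funpow_swap1)
  define n where "n = (LEAST n. P n)"
  have Pn: "P n" unfolding n_def by (rule LeastI[of P, OF P1])
  have nmin: "\<not> P i" if "i < n" for i unfolding n_def by (rule not_less_Least) (use that n_def in simp)
  have n1: "n \<ge> 1" and nfix: "(s ^^ n) v0 = v0" using Pn by (auto simp: P_def)
  define vs where "vs i = (s ^^ i) v0" for i
  have per0: "(s ^^ (n * q)) v0 = v0" for q
  proof (induction q)
    case 0 then show ?case by simp
  next
    case (Suc q)
    have "n * Suc q = n + n * q" by simp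
    then have "(s ^^ (n * Suc q)) v0 = (s ^^ n) ((s ^^ (n * q)) v0)" by (simp only: funpow_add comp_apply)
    then show ?case using Suc nfix by simp
  qed
  have per: "vs i = vs (i mod n)" for i
  proof -
    have "i = i mod n + n * (i div n)" by simp
    then have "vs i = (s ^^ (i mod n + n * (i div n))) v0" unfolding vs_def by simp
    then have "vs i = (s ^^ (i mod n)) ((s ^^ (n * (i div n))) v0)" by (simp only: funpow_add comp_apply)
    then show ?thesis by (simp add: per0 vs_def)
  qed
  have inj: "inj_on vs {0..<n}"
  proof (rule inj_onI, rule ccontr)
    fix i j assume i: "i \<in> {0..<n}" and j: "j \<in> {0..<n}" and eq: "vs i = vs j" and ne: "i \<noteq> j"
    have key: False if "i < j" "j < n" "vs i = vs j" for i j
    proof -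
      have "(s ^^ (n - j + i)) v0 = (s ^^ (n - j)) (vs i)" by (simp add: vs_def funpow_add)
      also have "\<dots> = (s ^^ (n - j)) (vs j)" using that by simp
      also have "\<dots> = (s ^^ n) v0"
      proof -
        have "n = (n - j) + j" using that by simp
        then have "(s ^^ n) v0 = (s ^^ (n - j)) ((s ^^ j) v0)" by (metis funpow_add comp_apply)
        then show ?thesis by (simp add: vs_def)
      qed
      finally have "(s ^^ (n - j + i)) v0 = v0" using nfix by simp
      moreover have "n - j + i < n" "n - j + i \<ge> 1" using that by auto
      ultimately show False using nmin unfolding P_def by blast
    qed
    show False
    proof (cases "i < j")
      case True then show ?thesis using key[of i j] j eq by simp
    next
      case False then have "j < i" using ne by simp
      then show ?thesis using key[of j i] i eq by simp
    qed
  qed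
  have bv: "bij_betw vs {0..<n} (dverts H)"
    unfolding bij_betw_def
  proof
    show "inj_on vs {0..<n}" by (rule inj)
    show "vs ` {0..<n} = dverts H"
    proof
      show "vs ` {0..<n} \<subseteq> dverts H" using sVn v0 by (auto simp: vs_def)
      show "dverts H \<subseteq> vs ` {0..<n}"
      proof
        fix v assume "v \<in> dverts H"
        then obtain k where "v = vs k" using reach[OF v0] by (auto simp: vs_def)
        then have "v = vs (k mod n)" using per by simp
        moreover have "k mod n \<in> {0..<n}" using n1 by simp
        ultimately show "v \<in> vs ` {0..<n}" by blast
      qed
    qed
  qed
  define ars where "ars i = out (vs i)" for i
  have vsV: "vs i \<in> dverts H" for i using sVn v0 by (simp add: vs_def)
  have ba: "bij_betw ars {0..<n} (darcs H)"
    unfolding bij_betw_def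
  proof
    show "inj_on ars {0..<n}"
    proof (rule inj_onI)
      fix i j assume "i \<in> {0..<n}" "j \<in> {0..<n}" "ars i = ars j"
      then have "vs i = vs j" using out[OF vsV[of i]] out[OF vsV[of j]] unfolding ars_def by metis
      then show "i = j" using inj `i \<in> _` `j \<in> _` by (simp add: inj_on_def)
    qed
    show "ars ` {0..<n} = darcs H"
    proof
      show "ars ` {0..<n} \<subseteq> darcs H" using out vsV by (auto simp: ars_def)
      show "darcs H \<subseteq> ars ` {0..<n}"
      proof
        fix e assume e: "e \<in> darcs H"
        then have "dtail H e \<in> dverts H" using w by (auto simp: wf_dg_def)
        then have "dtail H e \<in> vs ` {0..<n}" using bv by (simp add: bij_betw_def)
        then obtain i where "i \<in> {0..<n}" "dtail H e = vs i" by blast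
        then show "e \<in> ars ` {0..<n}" using out_eq[OF e] by (auto simp: ars_def)
      qed
    qed
  qed
  have arcs_ok: "\<forall>i<n. dtail H (ars i) = vs i \<and> dhead H (ars i) = vs ((i + 1) mod n)"
  proof (intro allI impI conjI)
    fix i assume "i < n"
    show "dtail H (ars i) = vs i" using out[OF vsV] by (simp add: ars_def)
    have "dhead H (ars i) = s (vs i)" by (simp add: ars_def s_def)
    also have "\<dots> = vs (Suc i)" by (simp add: vs_def)
    also have "\<dots> = vs ((i + 1) mod n)" using per by simp
    finally show "dhead H (ars i) = vs ((i + 1) mod n)" .
  qed
  show ?thesis unfolding is_directed_cycle_def
    by (rule exI[of _ n], rule exI[of _ vs], rule exI[of _ ars]) (use n1 bv ba arcs_ok in simp)
qed


lemma iter_suc: "iter_line_dg (Suc k) G = line_dg (iter_line_dg k G)"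
  by (simp add: iter_line_dg_def)

lemma invariant:
  assumes sub: "subdigraph H G" and sc: "strongly_connected H" and br: "branching H" and w: "wf_dg G"
  shows "wf_dg (iter_line_dg k G) \<and> subdigraph (iter_line_dg k H) (iter_line_dg k G) \<and>
    strongly_connected (iter_line_dg k H) \<and> branching (iter_line_dg k H) \<and>
    card (dverts (iter_line_dg k H)) \<ge> k + 1 \<and> (\<forall>y. outdeg (iter_line_dg k G) y \<le> card (darcs G))"
proof (induction k)
  case 0
  have wH: "wf_dg H" using sub by (simp add: subdigraph_def)
  obtain a1 where a1: "a1 \<in> darcs H" using br unfolding branching_def by blast
  then have "dtail H a1 \<in> dverts H" using wH by (simp add: wf_dg_def)
  moreover have "finite (dverts H)" using wH by (simp add: wf_dg_def)
  ultimately have c: "card (dverts H) \<ge> 1"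
    by (metis One_nat_def Suc_leI card_gt_0_iff empty_iff)
  have od: "outdeg G y \<le> card (darcs G)" for y
    unfolding outdeg_def by (rule card_mono) (use w in \<open>auto simp: wf_dg_def\<close>)
  show ?case using w sub sc br c od by (simp add: iter_line_dg_def)
next
  case (Suc k)
  let ?G = "iter_line_dg k G" and ?K = "iter_line_dg k H"
  have wG: "wf_dg ?G" and subK: "subdigraph ?K ?G" and scK: "strongly_connected ?K"
    and brK: "branching ?K" and cK: "card (dverts ?K) \<ge> k + 1"
    and odK: "\<forall>y. outdeg ?G y \<le> card (darcs G)" using Suc by auto
  have wK: "wf_dg ?K" using subK by (simp add: subdigraph_def)
  have 1: "wf_dg (line_dg ?G)" by (rule wf_line[OF wG])
  have 2: "subdigraph (line_dg ?K) (line_dg ?G)" by (rule sub_line[OF subK])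
  have 3: "strongly_connected (line_dg ?K)" by (rule sc_line[OF wK scK])
  have 4: "branching (line_dg ?K)" by (rule branch_line[OF wK scK brK])
  have "card (dverts ?K) < card (darcs ?K)" by (rule card_arcs[OF wK scK brK])
  then have 5: "card (dverts (line_dg ?K)) \<ge> Suc k + 1" using cK by simp
  have fG: "finite (darcs ?G)" using wG by (simp add: wf_dg_def)
  have 6: "\<forall>y. outdeg (line_dg ?G) y \<le> card (darcs G)" using outdeg_line[OF fG odK] by blast
  show ?case unfolding iter_suc using 1 2 3 4 5 6 by blast
qed

theorem proposition3p1:
  fixes G H :: dg
  assumes "wf_dg G"
    and "\<not> strongly_connected G"
    and "subdigraph H G"
    and "strongly_connected H"
    and "darcs H \<noteq> {}"
    and "\<not> is_directed_cycle H"
  shows "filterlim (\<lambda>k. inner_diam (iter_line_dg k G)) at_top sequentially"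
proof -
  have wH: "wf_dg H" using assms(3) by (simp add: subdigraph_def)
  have br: "branching H"
  proof (rule ccontr)
    assume "\<not> branching H"
    then have "is_directed_cycle H" using cycle_lemma[OF wH assms(4) assms(5)] by blast
    with assms(6) show False by simp
  qed
  define \<Delta> where "\<Delta> = card (darcs G)"
  define B where "B D = (\<Sum>i<D. \<Delta> ^ i)" for D
  have key: "D \<le> inner_diam (iter_line_dg k G)" if "k \<ge> B D" for k D
  proof -
    let ?G = "iter_line_dg k G" and ?K = "iter_line_dg k H"
    have inv: "wf_dg ?G \<and> subdigraph ?K ?G \<and> strongly_connected ?K \<and> branching ?K \<and>
      card (dverts ?K) \<ge> k + 1 \<and> (\<forall>y. outdeg ?G y \<le> \<Delta>)"
      unfolding \<Delta>_def by (rule invariant[OF assms(3) assms(4) br assms(1)])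
    then have wG: "wf_dg ?G" and subK: "subdigraph ?K ?G" and scK: "strongly_connected ?K"
      and cK: "card (dverts ?K) \<ge> k + 1" and od: "\<forall>y. outdeg ?G y \<le> \<Delta>" by blast+
    have cardK: "card (dverts ?K) > B D" using cK that by linarith
    then have "dverts ?K \<noteq> {}" by (metis card.empty not_less0)
    then obtain w where w: "w \<in> dverts ?K" by blast
    have walkK: "\<exists>es. is_walk ?G w es v" if "v \<in> dverts ?K" for v
    proof -
      have "\<forall>u\<in>dverts ?K. \<forall>v\<in>dverts ?K. reachable ?K u v" using scK by (simp only: strongly_connected_def)
      then have "reachable ?K w v" using w that by blast
      then obtain es where "is_walk ?K w es v" unfolding reachable_def by blast
      then show ?thesis using sub_walk[OF subK] by blast
    qed
    have "\<exists>v\<in>dverts ?K. D \<le> dist ?G w v"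
    proof (rule ccontr)
      assume "\<not> ?thesis"
      then have lt: "\<forall>v\<in>dverts ?K. dist ?G w v < D" by auto
      have subs: "dverts ?K \<subseteq> (\<Union>i<D. S ?G i w)"
      proof
        fix v assume v: "v \<in> dverts ?K"
        obtain es where "is_walk ?G w es v" using walkK[OF v] by blast
        then have "\<exists>n es. is_walk ?G w es v \<and> length es = n" by blast
        then have "\<exists>es. is_walk ?G w es v \<and> length es = dist ?G w v"
          unfolding dist_def by (rule LeastI_ex)
        then have "v \<in> S ?G (dist ?G w v) w" by (simp add: S_def)
        then show "v \<in> (\<Union>i<D. S ?G i w)" using lt v by blast
      qed
      have "card (dverts ?K) \<le> card (\<Union>i<D. S ?G i w)"
        by (rule card_mono[OF _ subs]) (use S_fin[OF wG] in simp)
      also have "\<dots> \<le> (\<Sum>i<D. card (S ?G i w))" by (rule card_UN_le) simp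
      also have "\<dots> \<le> (\<Sum>i<D. \<Delta> ^ i)" by (rule sum_mono) (rule S_card[OF wG od])
      also have "\<dots> = B D" by (simp add: B_def)
      finally show False using cardK by simp
    qed
    then obtain v where v: "v \<in> dverts ?K" "D \<le> dist ?G w v" by blast
    have r: "reachable ?G w v" using walkK[OF v(1)] by (simp add: reachable_def)
    have wv: "w \<in> dverts ?G" "v \<in> dverts ?G" using w v(1) subK by (auto simp: subdigraph_def)
    have fin: "finite {dist ?G u v | u v. u \<in> dverts ?G \<and> v \<in> dverts ?G \<and> reachable ?G u v}"
    proof (rule finite_subset)
      show "{dist ?G u v | u v. u \<in> dverts ?G \<and> v \<in> dverts ?G \<and> reachable ?G u v}
        \<subseteq> (\<lambda>(u, v). dist ?G u v) ` (dverts ?G \<times> dverts ?G)" by auto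
      show "finite ((\<lambda>(u, v). dist ?G u v) ` (dverts ?G \<times> dverts ?G))"
        using wG by (simp add: wf_dg_def)
    qed
    have "dist ?G w v \<le> inner_diam ?G"
      unfolding inner_diam_def by (rule Max_ge[OF fin]) (use r wv in blast)
    then show ?thesis using v(2) by simp
  qed
  show ?thesis unfolding filterlim_at_top eventually_sequentially
    using key by blast
qed

end
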